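(* Let $\theta_1,\theta_2>0$ and consider on $[0,1]^3$ the system $\dot x = x(1-x)(0.5ry-0.5y+0.5)$, $\dot y = y(1-y)(0.5rx-0.5x-0.5r)$, $\dot r = r(1-r)[(1+\theta_1)x+(1+\theta_2)y-2]$. For every initial condition $(x_0,y_0,r_0)\in(0,1)^3$, the solution satisfies $x(t)\to1$ and $y(t)\to0$ as $t\to\infty$; moreover $r(t)\to1$ if $\theta_1>1$, $r(t)\to0$ if $\theta_1<1$, and if $\theta_1=1$ the solution converges to a point of the segment $\{(1,0,r):r\in[0,1]\}$.
   Context: This is the two-population replicator system with environmental feedback for the payoff matrices $A(r)=\begin{bmatrix}0.5r&1\\0&0.5\end{bmatrix}$ (population 1) and $B(r)=\begin{bmatrix}0.5&0\\1&0.5r\end{bmatrix}$ (population 2); $x,y$ are the fractions of strategy 1 in populations 1 and 2 and $r\in[0,1]$ is the environmental state. *)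

theory Defs
  imports Complex_Main
begin

definition fx :: "real \<Rightarrow> real \<Rightarrow> real \<Rightarrow> real" where
  "fx x y r = x * (1 - x) * (0.5 * r * y - 0.5 * y + 0.5)"

definition fy :: "real \<Rightarrow> real \<Rightarrow> real \<Rightarrow> real" where
  "fy x y r = y * (1 - y) * (0.5 * r * x - 0.5 * x - 0.5 * r)"

definition fr :: "real \<Rightarrow> real \<Rightarrow> real \<Rightarrow> real \<Rightarrow> real \<Rightarrow> real" where
  "fr \<theta>1 \<theta>2 x y r = r * (1 - r) * ((1 + \<theta>1) * x + (1 + \<theta>2) * y - 2)"

definition is_solution ::
  "real \<Rightarrow> real \<Rightarrow> (real \<Rightarrow> real) \<Rightarrow> (real \<Rightarrow> real) \<Rightarrow> (real \<Rightarrow> real) \<Rightarrow> bool" where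
  "is_solution \<theta>1 \<theta>2 x y r \<longleftrightarrow>
     (\<forall>t\<ge>0. (x has_real_derivative fx (x t) (y t) (r t)) (at t within {0..}) \<and>
             (y has_real_derivative fy (x t) (y t) (r t)) (at t within {0..}) \<and>
             (r has_real_derivative fr \<theta>1 \<theta>2 (x t) (y t) (r t)) (at t within {0..}))"

end

theory Submission
  imports Defs "HOL-Analysis.Analysis"
begin


lemma cfx: fixes r y :: real assumes "0<y" "y<1" "0<r" "r<1"
  shows "0.5 * r * y - 0.5 * y + 0.5 \<ge> (0::real)" "0.5 * r * y - 0.5 * y + 0.5 \<le> (1/2::real)"
proof -
  have "r*y \<ge> 0" using assms by simp
  moreover have "r*y \<le> 1*y" using assms by (intro mult_right_mono) auto
  ultimately show "0.5 * r * y - 0.5 * y + 0.5 \<ge> (0::real)" "0.5 * r * y - 0.5 * y + 0.5 \<le> (1/2::real)"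
    using assms by argo+
qed

lemma L1: assumes "0<x" "x<1" "0<y" "y<1" "0<r" "r<1" shows "fx x y r \<ge> 0"
  using cfx[OF assms(3-6)] assms unfolding fx_def by simp

lemma L2: assumes "0<x" "x<1" "0<y" "y<1" "0<r" "r<1" shows "fx x y r \<le> (1 - x)/2"
proof -
  have "x * (0.5 * r * y - 0.5 * y + 0.5) \<le> 1 * (1/2)" using cfx[OF assms(3-6)] assms
    by (intro mult_mono) auto
  hence "(1-x) * (x * (0.5 * r * y - 0.5 * y + 0.5)) \<le> (1-x) * (1/2)" using assms by (intro mult_left_mono) auto
  thus ?thesis unfolding fx_def by (simp add: algebra_simps)
qed

lemma L3: assumes "0<x" "x<1" "0<y" "y<1" "0<r" "r<1" shows "fy x y r \<le> 0"
proof -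
  have "r*x \<le> r*1" using assms by (intro mult_left_mono) auto
  hence "0.5 * r * x - 0.5 * x - 0.5 * r \<le> 0" using assms by argo
  thus ?thesis using assms unfolding fy_def by (simp add: mult_nonneg_nonpos)
qed

lemma L4: assumes "0<x" "x<1" "0<y" "y<1" "0<r" "r<1" shows "fy x y r \<ge> - y/2"
proof -
  have a: "r*x \<ge> 0" using assms by simp
  have b: "r*x \<le> r*1" using assms by (intro mult_left_mono) auto
  have d: "(1-x)*(1-r) \<ge> 0" using assms by simp
  have e: "(1-x)*(1-r) = 1 - x - r + r*x" by (simp add: algebra_simps)
  have c: "0.5 * r * x - 0.5 * x - 0.5 * r \<ge> -1/2" "0.5 * r * x - 0.5 * x - 0.5 * r \<le> 0" using a b d e assms by argo+
  have "(1-y) * (0.5 * r * x - 0.5 * x - 0.5 * r) \<ge> 1 * (0.5 * r * x - 0.5 * x - 0.5 * r)"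
    using assms c by (intro mult_right_mono_neg) auto
  hence "(1-y) * (0.5 * r * x - 0.5 * x - 0.5 * r) \<ge> -1/2" using c by argo
  hence "y* ((1-y) * (0.5 * r * x - 0.5 * x - 0.5 * r)) \<ge> y * (-1/2)" using assms
    by (intro mult_left_mono) auto
  thus ?thesis unfolding fy_def by (simp add: algebra_simps)
qed

lemma L5: assumes "0<x" "x<1" "0<y" "y<1" "0<r" "r<1" "\<theta>1>0" "\<theta>2>0"
  shows "fr \<theta>1 \<theta>2 x y r \<ge> -2*r"
proof -
  have G: "(1 + \<theta>1) * x + (1 + \<theta>2) * y - 2 \<ge> -2" using assms by (simp add: add_nonneg_nonneg)
  have "(1-r) * ((1 + \<theta>1) * x + (1 + \<theta>2) * y - 2) \<ge> -2" 
  proof (cases "(1 + \<theta>1) * x + (1 + \<theta>2) * y - 2 \<ge> 0")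
    case True hence "(1-r) * ((1 + \<theta>1) * x + (1 + \<theta>2) * y - 2) \<ge> 0" using assms by simp
    thus ?thesis by argo
  next
    case False
    hence "(1-r) * ((1 + \<theta>1) * x + (1 + \<theta>2) * y - 2) \<ge> 1 * ((1 + \<theta>1) * x + (1 + \<theta>2) * y - 2)"
      using assms by (intro mult_right_mono_neg) auto
    thus ?thesis using G by argo
  qed
  hence "r * ((1-r) * ((1 + \<theta>1) * x + (1 + \<theta>2) * y - 2)) \<ge> r * (-2)" using assms
    by (intro mult_left_mono) auto
  thus ?thesis unfolding fr_def by (simp add: algebra_simps)
qed

lemma L6: assumes "0<x" "x<1" "0<y" "y<1" "0<r" "r<1" "\<theta>1>0" "\<theta>2>0"
  shows "fr \<theta>1 \<theta>2 x y r \<le> (2+\<theta>1+\<theta>2)*(1-r)"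
proof -
  have "(1 + \<theta>1) * x \<le> (1 + \<theta>1) * 1" "(1 + \<theta>2) * y \<le> (1 + \<theta>2) * 1"
    using assms by (intro mult_left_mono; simp)+
  hence G: "(1 + \<theta>1) * x + (1 + \<theta>2) * y - 2 \<le> 2+\<theta>1+\<theta>2" using assms by argo
  have "r * ((1 + \<theta>1) * x + (1 + \<theta>2) * y - 2) \<le> 2+\<theta>1+\<theta>2"
  proof (cases "(1 + \<theta>1) * x + (1 + \<theta>2) * y - 2 \<ge> 0")
    case True 
    hence "r * ((1 + \<theta>1) * x + (1 + \<theta>2) * y - 2) \<le> 1 * ((1 + \<theta>1) * x + (1 + \<theta>2) * y - 2)"
      using assms by (intro mult_right_mono) auto
    thus ?thesis using G by argo
  next
    case False hence "r * ((1 + \<theta>1) * x + (1 + \<theta>2) * y - 2) \<le> 0" using assms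
      by (intro mult_nonneg_nonpos) auto
    thus ?thesis using assms by argo
  qed
  hence "(1-r) * (r * ((1 + \<theta>1) * x + (1 + \<theta>2) * y - 2)) \<le> (1-r) * (2+\<theta>1+\<theta>2)" using assms
    by (intro mult_left_mono) auto
  thus ?thesis unfolding fr_def by (simp add: algebra_simps)
qed

lemma L7: assumes "0<x0" "x0\<le>x" "x\<le>a" "a<1" "0<y" "y\<le>y0" "y0<1" "0<r" "r<1"
  shows "fx x y r \<ge> x0*(1-a)*(1-y0)/2"
proof -
  have p: "x*(1-x) \<ge> x0*(1-a)" using assms by (intro mult_mono) auto
  have "r*y \<ge> 0" using assms by simp
  hence q: "0.5 * r * y - 0.5 * y + 0.5 \<ge> (1-y0)/2" using assms by argo
  have "x*(1-x)*(0.5 * r * y - 0.5 * y + 0.5) \<ge> x0*(1-a)*((1-y0)/2)"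
    using p q assms by (intro mult_mono) auto
  thus ?thesis unfolding fx_def by simp
qed

lemma L8: assumes "0<x0" "x0\<le>x" "x<1" "0<a" "a\<le>y" "y\<le>y0" "y0<1" "0<r" "r<1"
  shows "fy x y r \<le> -(a*(1-y0)*x0/2)"
proof -
  have p: "y*(1-y) \<ge> a*(1-y0)" using assms by (intro mult_mono) auto
  have "x0*(1-r) \<le> x*(1-r)" using assms by (intro mult_right_mono) auto
  moreover have "r*(1-x0) \<ge> 0" using assms by simp
  ultimately have q: "x*(1-r)+r \<ge> x0" by (simp add: algebra_simps)
  have "y*(1-y)*((x*(1-r)+r)/2) \<ge> a*(1-y0)*(x0/2)"
    using p q assms by (intro mult_mono) auto
  moreover have "fy x y r = - (y*(1-y)*((x*(1-r)+r)/2))" unfolding fy_def by (simp add: field_simps)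
  ultimately show ?thesis by simp
qed

lemma L9: assumes "1/2\<le>x" "x<1" "0<y" "y\<le>1/2" "0<r" "r<1"
  shows "8 * fy x y r \<le> - y"
proof -
  have "r*x \<le> r*1" using assms by (intro mult_left_mono) auto
  moreover have "x*(1-r) = x - r*x" by (simp add: algebra_simps)
  ultimately have q: "x*(1-r)+r \<ge> 1/2" using assms by argo
  have "(1-y)*(x*(1-r)+r) \<ge> (1/2)*(1/2)" using q assms by (intro mult_mono) auto
  hence "y*((1-y)*(x*(1-r)+r)) \<ge> y*(1/4)" using assms by (intro mult_left_mono) auto
  moreover have "8 * fy x y r = - 4 * (y*((1-y)*(x*(1-r)+r)))" unfolding fy_def by (simp add: field_simps)
  ultimately show ?thesis by argo
qed

lemma L10: assumes "1/2\<le>x" "x<1" "0<y" "y\<le>1/2" "0<r" "r<1"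
  shows "8 * fx x y r \<ge> 1 - x"
proof -
  have "y*(1-r) \<le> y*1" using assms by (intro mult_left_mono) auto
  hence q: "1 - y*(1-r) \<ge> 1/2" using assms by argo
  have "x*(1 - y*(1-r)) \<ge> (1/2)*(1/2)" using q assms by (intro mult_mono) auto
  hence "(1-x)*(x*(1 - y*(1-r))) \<ge> (1-x)*(1/4)" using assms by (intro mult_left_mono) auto
  moreover have "8 * fx x y r = 4 * ((1-x)*(x*(1 - y*(1-r))))" unfolding fx_def by (simp add: field_simps)
  ultimately show ?thesis by argo
qed


lemma deriv_at0:
  assumes "t > 0" "(f has_real_derivative D) (at t within {0..})"
  shows "(f has_real_derivative D) (at t)"
proof -
  have h: "(f has_real_derivative D) (at t within {0<..})"
    using assms(2) by (rule has_field_derivative_subset) auto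
  have e: "at t within {0<..} = at t" using assms(1) by (intro at_within_open) auto
  show ?thesis using h unfolding e .
qed

lemma mono_lemma:
  fixes g g' :: "real \<Rightarrow> real"
  assumes d: "\<And>t. t \<ge> 0 \<Longrightarrow> (g has_real_derivative g' t) (at t within {0..})"
    and "0 \<le> a" "a \<le> b"
    and nn: "\<And>t. a < t \<Longrightarrow> t < b \<Longrightarrow> g' t \<ge> 0"
  shows "g a \<le> g b"
proof (rule DERIV_nonneg_imp_increasing_open[OF \<open>a \<le> b\<close>])
  fix t assume "a < t" "t < b"
  thus "\<exists>y. DERIV g t :> y \<and> y \<ge> 0"
    using d[of t] nn[of t] deriv_at0[of t g] \<open>0 \<le> a\<close> by auto
next
  have "continuous (at t within {0..}) g" if "t \<in> {0..}" for t
    using DERIV_continuous[OF d[of t]] that by simp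
  hence "continuous_on {0..} g" unfolding continuous_on_eq_continuous_within by blast
  thus "continuous_on {a..b} g"
    by (rule continuous_on_subset) (use \<open>0 \<le> a\<close> in auto)
qed

lemma cont_lemma:
  fixes g g' :: "real \<Rightarrow> real"
  assumes d: "\<And>t. t \<ge> 0 \<Longrightarrow> (g has_real_derivative g' t) (at t within {0..})"
  shows "continuous_on {0..} g"
proof -
  have "continuous (at t within {0..}) g" if "t \<in> {0..}" for t
    using DERIV_continuous[OF d[of t]] that by simp
  thus ?thesis unfolding continuous_on_eq_continuous_within by blast
qed

lemma grow_contra:
  fixes g g' :: "real \<Rightarrow> real"
  assumes d: "\<And>t. t \<ge> 0 \<Longrightarrow> (g has_real_derivative g' t) (at t within {0..})"
    and u: "0 \<le> u" and dp: "\<delta> > 0" and gd: "\<And>t. t > u \<Longrightarrow> g' t \<ge> \<delta>"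
    and ub: "\<And>t. t \<ge> 0 \<Longrightarrow> g t \<le> 1" and g1: "g u \<ge> 0"
  shows False
proof -
  define b where "b = u + 2/\<delta>"
  have d2: "((\<lambda>t. g t - \<delta>*t) has_real_derivative g' t - \<delta>) (at t within {0..})" if "t \<ge> 0" for t
    using d[OF that] by (auto intro!: derivative_eq_intros)
  have "u \<le> b" using dp by (simp add: b_def)
  have nn: "g' t - \<delta> \<ge> 0" if "u < t" "t < b" for t using gd[OF that(1)] by simp
  have "g u - \<delta>*u \<le> g b - \<delta>*b"
    by (rule mono_lemma[where g="\<lambda>t. g t - \<delta>*t" and g'="\<lambda>t. g' t - \<delta>", OF d2 u \<open>u \<le> b\<close> nn])
  moreover have "\<delta>*b = \<delta>*u + 2" unfolding b_def using dp by (simp add: distrib_left)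
  moreover have "g b \<le> 1" using ub[of b] \<open>u \<le> b\<close> u by linarith
  ultimately show False using g1 by linarith
qed

lemma prodmono: fixes a1 a2 b1 b2 c1 c2 :: real
  assumes "0 \<le> a1" "a1 \<le> a2" "0 \<le> b1" "b1 \<le> b2" "0 \<le> c1" "c1 \<le> c2"
  shows "a1*b1*c1 \<le> a2*b2*c2"
proof -
  have "a1*b1 \<le> a2*b2" using assms by (intro mult_mono) auto
  thus ?thesis using assms by (intro mult_mono) auto
qed



theorem mainTheorem4:
  fixes \<theta>1 \<theta>2 :: real and x y r :: "real \<Rightarrow> real"
  assumes "\<theta>1 > 0" and "\<theta>2 > 0"
    and "is_solution \<theta>1 \<theta>2 x y r"
    and "x 0 \<in> {0<..<1}" and "y 0 \<in> {0<..<1}" and "r 0 \<in> {0<..<1}"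
  shows "(x \<longlongrightarrow> 1) at_top \<and> (y \<longlongrightarrow> 0) at_top \<and>
         (\<theta>1 > 1 \<longrightarrow> (r \<longlongrightarrow> 1) at_top) \<and>
         (\<theta>1 < 1 \<longrightarrow> (r \<longlongrightarrow> 0) at_top) \<and>
         (\<theta>1 = 1 \<longrightarrow> (\<exists>r_lim\<in>{0..1}. (r \<longlongrightarrow> r_lim) at_top))"
proof -
  have th1: "\<theta>1 > 0" and th2: "\<theta>2 > 0" using assms(1,2) .
  have x0: "0 < x 0" "x 0 < 1" and y0: "0 < y 0" "y 0 < 1" and r0: "0 < r 0" "r 0 < 1"
    using assms(4-6) by auto
  have dx: "(x has_real_derivative fx (x t) (y t) (r t)) (at t within {0..})" if "t \<ge> 0" for t
    using assms(3) that unfolding is_solution_def by blast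
  have dy: "(y has_real_derivative fy (x t) (y t) (r t)) (at t within {0..})" if "t \<ge> 0" for t
    using assms(3) that unfolding is_solution_def by blast
  have dr: "(r has_real_derivative fr \<theta>1 \<theta>2 (x t) (y t) (r t)) (at t within {0..})" if "t \<ge> 0" for t
    using assms(3) that unfolding is_solution_def by blast
  define ins where "ins t \<longleftrightarrow> 0 < x t \<and> x t < 1 \<and> 0 < y t \<and> y t < 1 \<and> 0 < r t \<and> r t < 1" for t
  have inv: "ins t" if "t \<ge> 0" for t
  proof (rule ccontr)
    assume nt: "\<not> ins t"
    define B where "B = {t. 0 \<le> t \<and> \<not> ins t}"
    have Bne: "B \<noteq> {}" using that nt by (auto simp: B_def)
    have bdd: "bdd_below B" unfolding B_def by (rule bdd_belowI[of _ 0]) auto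
    have cx: "continuous_on {0..} x" by (rule cont_lemma[where g'="\<lambda>t. fx (x t) (y t) (r t)", OF dx])
    have cy: "continuous_on {0..} y" by (rule cont_lemma[where g'="\<lambda>t. fy (x t) (y t) (r t)", OF dy])
    have cr: "continuous_on {0..} r" by (rule cont_lemma[where g'="\<lambda>t. fr \<theta>1 \<theta>2 (x t) (y t) (r t)", OF dr])
    have cl: "closed (-{0<..<1::real})" by (simp add: closed_Compl)
    have Beq: "B = ({0..} \<inter> x -` (-{0<..<1})) \<union> ({0..} \<inter> y -` (-{0<..<1})) \<union> ({0..} \<inter> r -` (-{0<..<1}))"
      by (auto simp: B_def ins_def)
    have "closed B" unfolding Beq
      by (intro closed_Un continuous_closed_preimage cx cy cr closed_atLeast cl)
    define T where "T = Inf B"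
    have "T \<in> B" using closed_contains_Inf[OF Bne bdd \<open>closed B\<close>] by (simp add: T_def)
    hence T0: "T \<ge> 0" "\<not> ins T" by (auto simp: B_def)
    have before: "ins s" if "0 \<le> s" "s < T" for s
    proof (rule ccontr)
      assume "\<not> ins s"
      hence "s \<in> B" using that by (auto simp: B_def)
      hence "T \<le> s" unfolding T_def using bdd by (rule cInf_lower)
      thus False using that by simp
    qed
    have monoT: "g 0 \<le> g T" if d: "\<And>t. 0 \<le> t \<Longrightarrow> (g has_real_derivative g' t) (at t within {0..})"
      and nn: "\<And>t. 0 < t \<Longrightarrow> ins t \<Longrightarrow> g' t \<ge> 0" for g g' :: "real \<Rightarrow> real"
      by (rule mono_lemma[OF d _ T0(1)]) (use nn before in auto)
    have h1: "x 0 \<le> x T"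
      by (rule monoT[OF dx]) (auto simp: ins_def intro!: L1)
    have h2: "(1 - x 0) * exp (0/2) \<le> (1 - x T) * exp (T/2)"
    proof (rule monoT[where g="\<lambda>t. (1 - x t) * exp (t/2)"
          and g'="\<lambda>t. exp (t/2) * ((1 - x t)/2 - fx (x t) (y t) (r t))"])
      fix t :: real assume "0 \<le> t"
      show "((\<lambda>t. (1 - x t) * exp (t/2)) has_real_derivative exp (t/2) * ((1 - x t)/2 - fx (x t) (y t) (r t))) (at t within {0..})"
        using dx[OF \<open>0 \<le> t\<close>] by (auto intro!: derivative_eq_intros simp: algebra_simps)
    next
      fix t :: real assume "0 < t" "ins t"
      thus "0 \<le> exp (t/2) * ((1 - x t)/2 - fx (x t) (y t) (r t))"
        using L2[of "x t" "y t" "r t"] by (auto simp: ins_def)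
    qed
    have h3: "1 - y 0 \<le> 1 - y T"
    proof (rule monoT[where g="\<lambda>t. 1 - y t" and g'="\<lambda>t. - fy (x t) (y t) (r t)"])
      fix t :: real assume "0 \<le> t"
      show "((\<lambda>t. 1 - y t) has_real_derivative - fy (x t) (y t) (r t)) (at t within {0..})"
        using dy[OF \<open>0 \<le> t\<close>] by (auto intro!: derivative_eq_intros)
    next
      fix t :: real assume "0 < t" "ins t"
      thus "0 \<le> - fy (x t) (y t) (r t)"
        using L3[of "x t" "y t" "r t"] by (auto simp: ins_def)
    qed
    have h4: "y 0 * exp (0/2) \<le> y T * exp (T/2)"
    proof (rule monoT[where g="\<lambda>t. y t * exp (t/2)"
          and g'="\<lambda>t. exp (t/2) * (fy (x t) (y t) (r t) + y t / 2)"])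
      fix t :: real assume "0 \<le> t"
      show "((\<lambda>t. y t * exp (t/2)) has_real_derivative exp (t/2) * (fy (x t) (y t) (r t) + y t / 2)) (at t within {0..})"
        using dy[OF \<open>0 \<le> t\<close>] by (auto intro!: derivative_eq_intros simp: algebra_simps)
    next
      fix t :: real assume "0 < t" "ins t"
      thus "0 \<le> exp (t/2) * (fy (x t) (y t) (r t) + y t / 2)"
        using L4[of "x t" "y t" "r t"] by (auto simp: ins_def)
    qed
    have h5: "r 0 * exp (2*0) \<le> r T * exp (2*T)"
    proof (rule monoT[where g="\<lambda>t. r t * exp (2*t)"
          and g'="\<lambda>t. exp (2*t) * (fr \<theta>1 \<theta>2 (x t) (y t) (r t) + 2 * r t)"])
      fix t :: real assume "0 \<le> t"
      show "((\<lambda>t. r t * exp (2*t)) has_real_derivative exp (2*t) * (fr \<theta>1 \<theta>2 (x t) (y t) (r t) + 2 * r t)) (at t within {0..})"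
        using dr[OF \<open>0 \<le> t\<close>] by (auto intro!: derivative_eq_intros simp: algebra_simps)
    next
      fix t :: real assume "0 < t" "ins t"
      thus "0 \<le> exp (2*t) * (fr \<theta>1 \<theta>2 (x t) (y t) (r t) + 2 * r t)"
        using L5[of "x t" "y t" "r t" \<theta>1 \<theta>2] th1 th2 by (auto simp: ins_def)
    qed
    define M where "M = 2 + \<theta>1 + \<theta>2"
    have h6: "(1 - r 0) * exp (M*0) \<le> (1 - r T) * exp (M*T)"
    proof (rule monoT[where g="\<lambda>t. (1 - r t) * exp (M*t)"
          and g'="\<lambda>t. exp (M*t) * (M * (1 - r t) - fr \<theta>1 \<theta>2 (x t) (y t) (r t))"])
      fix t :: real assume "0 \<le> t"
      show "((\<lambda>t. (1 - r t) * exp (M*t)) has_real_derivative exp (M*t) * (M * (1 - r t) - fr \<theta>1 \<theta>2 (x t) (y t) (r t))) (at t within {0..})"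
        using dr[OF \<open>0 \<le> t\<close>] by (auto intro!: derivative_eq_intros simp: algebra_simps)
    next
      fix t :: real assume "0 < t" "ins t"
      thus "0 \<le> exp (M*t) * (M * (1 - r t) - fr \<theta>1 \<theta>2 (x t) (y t) (r t))"
        using L6[of "x t" "y t" "r t" \<theta>1 \<theta>2] th1 th2 by (auto simp: ins_def M_def)
    qed
    have "0 < x T" using h1 x0 by simp
    moreover have "x T < 1"
    proof -
      have "0 < (1 - x T) * exp (T/2)" using h2 x0 by simp
      thus ?thesis by (simp add: zero_less_mult_iff)
    qed
    moreover have "y T < 1" using h3 y0 by simp
    moreover have "0 < y T"
    proof -
      have "0 < y T * exp (T/2)" using h4 y0 by simp
      thus ?thesis by (simp add: zero_less_mult_iff)
    qed
    moreover have "0 < r T"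
    proof -
      have "0 < r T * exp (2*T)" using h5 r0 by simp
      thus ?thesis by (simp add: zero_less_mult_iff)
    qed
    moreover have "r T < 1"
    proof -
      have "0 < (1 - r T) * exp (M*T)" using h6 r0 by simp
      thus ?thesis by (simp add: zero_less_mult_iff)
    qed
    ultimately have "ins T" by (simp add: ins_def)
    thus False using T0 by simp
  qed
  have I: "0 < x t" "x t < 1" "0 < y t" "y t < 1" "0 < r t" "r t < 1" if "t \<ge> 0" for t
    using inv[OF that] by (auto simp: ins_def)
  have dy': "((\<lambda>t. 1 - y t) has_real_derivative - fy (x t) (y t) (r t)) (at t within {0..})" if "t \<ge> 0" for t
    using dy[OF that] by (auto intro!: derivative_eq_intros)
  have dr': "((\<lambda>t. 1 - r t) has_real_derivative - fr \<theta>1 \<theta>2 (x t) (y t) (r t)) (at t within {0..})" if "t \<ge> 0" for t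
    using dr[OF that] by (auto intro!: derivative_eq_intros)
  have xmono: "x a \<le> x b" if "0 \<le> a" "a \<le> b" for a b
  proof (rule mono_lemma[OF dx that])
    fix t assume "a < t" "t < b"
    hence "t \<ge> 0" using that by simp
    thus "0 \<le> fx (x t) (y t) (r t)" using I[of t] L1 by simp
  qed
  have ymono: "y b \<le> y a" if "0 \<le> a" "a \<le> b" for a b
  proof -
    have "1 - y a \<le> 1 - y b"
    proof (rule mono_lemma[where g="\<lambda>t. 1 - y t", OF dy' that])
      fix t assume "a < t" "t < b"
      hence "t \<ge> 0" using that by simp
      thus "0 \<le> - fy (x t) (y t) (r t)" using I[of t] L3 by simp
    qed
    thus ?thesis by simp
  qed
  have xlim: "(x \<longlongrightarrow> 1) at_top"
  proof (rule order_tendstoI)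
    fix a :: real assume "a < 1"
    have "\<exists>t0\<ge>0. a < x t0"
    proof (rule ccontr)
      assume "\<not> (\<exists>t0\<ge>0. a < x t0)"
      hence H: "x t \<le> a" if "t \<ge> 0" for t using that by (auto simp: not_less)
      show False
      proof (rule grow_contra[where g=x and g'="\<lambda>t. fx (x t) (y t) (r t)" and u=0
            and \<delta>="x 0*(1-a)*(1-y 0)/2", OF dx])
        show "0 < x 0*(1-a)*(1-y 0)/2" using x0 y0 \<open>a < 1\<close> by simp
        fix t :: real assume "0 < t"
        thus "x 0*(1-a)*(1-y 0)/2 \<le> fx (x t) (y t) (r t)"
          using L7[of "x 0" "x t" a "y t" "y 0" "r t"] I[of t] H[of t] xmono[of 0 t] ymono[of 0 t] x0 y0 \<open>a<1\<close>
          by auto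
      qed (use I x0 in \<open>auto simp: less_imp_le\<close>)
    qed
    then obtain t0 where "t0 \<ge> 0" "a < x t0" by auto
    show "eventually (\<lambda>t. a < x t) at_top" unfolding eventually_at_top_linorder
      using xmono \<open>t0 \<ge> 0\<close> \<open>a < x t0\<close> by (intro exI[of _ t0]) (auto intro: less_le_trans)
  next
    fix a :: real assume "a > 1"
    show "eventually (\<lambda>t. x t < a) at_top" unfolding eventually_at_top_linorder
      using I \<open>a > 1\<close> by (intro exI[of _ 0]) (auto intro: less_trans)
  qed
  have ylim: "(y \<longlongrightarrow> 0) at_top"
  proof (rule order_tendstoI)
    fix a :: real assume "a > 0"
    have "\<exists>t0\<ge>0. y t0 < a"
    proof (rule ccontr)
      assume "\<not> (\<exists>t0\<ge>0. y t0 < a)"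
      hence H: "a \<le> y t" if "t \<ge> 0" for t using that by (auto simp: not_less)
      show False
      proof (rule grow_contra[where g="\<lambda>t. 1 - y t" and g'="\<lambda>t. - fy (x t) (y t) (r t)" and u=0
            and \<delta>="a*(1-y 0)*x 0/2", OF dy'])
        show "0 < a*(1-y 0)*x 0/2" using x0 y0 \<open>a > 0\<close> by simp
        fix t :: real assume "0 < t"
        thus "a*(1-y 0)*x 0/2 \<le> - fy (x t) (y t) (r t)"
          using L8[of "x 0" "x t" a "y t" "y 0" "r t"] I[of t] H[of t] xmono[of 0 t] ymono[of 0 t] x0 y0 \<open>a>0\<close>
          by auto
      qed (use I y0 in \<open>auto simp: less_imp_le\<close>)
    qed
    then obtain t0 where "t0 \<ge> 0" "y t0 < a" by auto
    show "eventually (\<lambda>t. y t < a) at_top" unfolding eventually_at_top_linorder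
      using ymono \<open>t0 \<ge> 0\<close> \<open>y t0 < a\<close> by (intro exI[of _ t0]) (auto intro: le_less_trans)
  next
    fix a :: real assume "a < 0"
    show "eventually (\<lambda>t. a < y t) at_top" unfolding eventually_at_top_linorder
      using I \<open>a < 0\<close> by (intro exI[of _ 0]) (auto intro: less_trans)
  qed
  define G where "G t = (1 + \<theta>1) * x t + (1 + \<theta>2) * y t - 2" for t
  have frG: "fr \<theta>1 \<theta>2 (x t) (y t) (r t) = r t * (1 - r t) * G t" for t
    by (simp add: fr_def G_def)
  have Glim: "(G \<longlongrightarrow> \<theta>1 - 1) at_top"
  proof -
    have "((\<lambda>t. (1 + \<theta>1) * x t + (1 + \<theta>2) * y t - 2) \<longlongrightarrow> (1 + \<theta>1) * 1 + (1 + \<theta>2) * 0 - 2) at_top"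
      by (intro tendsto_intros xlim ylim)
    thus ?thesis by (simp add: G_def[abs_def])
  qed
  have c1: "(r \<longlongrightarrow> 1) at_top" if "\<theta>1 > 1"
  proof -
    define \<eta> where "\<eta> = (\<theta>1 - 1)/2"
    have "\<eta> > 0" using that by (simp add: \<eta>_def)
    have "\<eta> < \<theta>1 - 1" using that by (simp add: \<eta>_def)
    hence "eventually (\<lambda>t. \<eta> < G t) at_top" by (rule order_tendstoD(1)[OF Glim])
    then obtain t1' where T1: "\<forall>t\<ge>t1'. \<eta> < G t" by (auto simp: eventually_at_top_linorder)
    define t1 where "t1 = max 0 t1'"
    have t1: "t1 \<ge> 0" by (simp add: t1_def)
    have Gt: "\<eta> < G t" if "t \<ge> t1" for t using that T1 by (simp add: t1_def)
    have rmono: "r a \<le> r b" if "t1 \<le> a" "a \<le> b" for a b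
    proof (rule mono_lemma[OF dr _ that(2)])
      show "0 \<le> a" using that t1 by simp
      fix t assume "a < t" "t < b"
      hence "t \<ge> t1" "t \<ge> 0" using that t1 by auto
      thus "0 \<le> fr \<theta>1 \<theta>2 (x t) (y t) (r t)" unfolding frG using I[of t] Gt[of t] \<open>\<eta>>0\<close>
        by (auto intro!: mult_nonneg_nonneg)
    qed
    show ?thesis
    proof (rule order_tendstoI)
      fix a :: real assume "a < 1"
      have "\<exists>t0\<ge>t1. a < r t0"
      proof (rule ccontr)
        assume "\<not> (\<exists>t0\<ge>t1. a < r t0)"
        hence H: "r t \<le> a" if "t \<ge> t1" for t using that by (auto simp: not_less)
        show False
        proof (rule grow_contra[where g=r and g'="\<lambda>t. fr \<theta>1 \<theta>2 (x t) (y t) (r t)" and u=t1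
              and \<delta>="r t1*(1-a)*\<eta>", OF dr t1])
          show "0 < r t1*(1-a)*\<eta>" using I[OF t1] \<open>\<eta>>0\<close> \<open>a<1\<close> by (intro mult_pos_pos) auto
          fix t :: real assume "t1 < t"
          hence tt: "t \<ge> t1" "t \<ge> 0" using t1 by auto
          have "r t1*(1-a)*\<eta> \<le> r t*(1 - r t)*G t"
            by (rule prodmono) (use I[of t] I[of t1] t1 H[of t] rmono[of t1 t] Gt[of t] \<open>\<eta>>0\<close> tt \<open>a<1\<close> in auto)
          thus "r t1*(1-a)*\<eta> \<le> fr \<theta>1 \<theta>2 (x t) (y t) (r t)" unfolding frG .
        qed (use I t1 in \<open>auto simp: less_imp_le\<close>)
      qed
      then obtain t0 where "t0 \<ge> t1" "a < r t0" by auto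
      show "eventually (\<lambda>t. a < r t) at_top" unfolding eventually_at_top_linorder
      proof (intro exI[of _ t0] allI impI)
        fix t assume "t \<ge> t0"
        thus "a < r t" using rmono[of t0 t] \<open>t0 \<ge> t1\<close> \<open>a < r t0\<close> by simp
      qed
    next
      fix a :: real assume "a > 1"
      show "eventually (\<lambda>t. r t < a) at_top" unfolding eventually_at_top_linorder
      proof (intro exI[of _ 0] allI impI)
        fix t :: real assume "t \<ge> 0" thus "r t < a" using I(6)[of t] \<open>a > 1\<close> by simp
      qed
    qed
  qed
  have c2: "(r \<longlongrightarrow> 0) at_top" if "\<theta>1 < 1"
  proof -
    define \<eta> where "\<eta> = (1 - \<theta>1)/2"
    have "\<eta> > 0" using that by (simp add: \<eta>_def)
    have "\<theta>1 - 1 < -\<eta>" using that unfolding \<eta>_def by argo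
    hence "eventually (\<lambda>t. G t < -\<eta>) at_top" by (rule order_tendstoD(2)[OF Glim])
    then obtain t1' where T1: "\<forall>t\<ge>t1'. G t < -\<eta>" by (auto simp: eventually_at_top_linorder)
    define t1 where "t1 = max 0 t1'"
    have t1: "t1 \<ge> 0" by (simp add: t1_def)
    have Gt: "G t < -\<eta>" if "t \<ge> t1" for t using that T1 by (simp add: t1_def)
    have frG': "- fr \<theta>1 \<theta>2 (x t) (y t) (r t) = r t * (1 - r t) * (- G t)" for t
      unfolding frG by simp
    have rmono: "r b \<le> r a" if "t1 \<le> a" "a \<le> b" for a b
    proof -
      have "1 - r a \<le> 1 - r b"
      proof (rule mono_lemma[where g="\<lambda>t. 1 - r t", OF dr' _ that(2)])
        show "0 \<le> a" using that t1 by simp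
        fix t assume "a < t" "t < b"
        hence "t \<ge> t1" "t \<ge> 0" using that t1 by auto
        hence "0 \<le> r t * (1 - r t) * (- G t)" using I[of t] Gt[of t] \<open>\<eta>>0\<close>
          by (intro mult_nonneg_nonneg) auto
        thus "0 \<le> - fr \<theta>1 \<theta>2 (x t) (y t) (r t)" unfolding frG' .
      qed
      thus ?thesis by simp
    qed
    show ?thesis
    proof (rule order_tendstoI)
      fix a :: real assume "a > 0"
      have "\<exists>t0\<ge>t1. r t0 < a"
      proof (rule ccontr)
        assume "\<not> (\<exists>t0\<ge>t1. r t0 < a)"
        hence H: "a \<le> r t" if "t \<ge> t1" for t using that by (auto simp: not_less)
        show False
        proof (rule grow_contra[where g="\<lambda>t. 1 - r t" and g'="\<lambda>t. - fr \<theta>1 \<theta>2 (x t) (y t) (r t)" and u=t1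
              and \<delta>="a*(1 - r t1)*\<eta>", OF dr' t1])
          show "0 < a*(1 - r t1)*\<eta>" using I[OF t1] \<open>\<eta>>0\<close> \<open>a>0\<close> by (intro mult_pos_pos) auto
          fix t :: real assume "t1 < t"
          hence tt: "t \<ge> t1" "t \<ge> 0" using t1 by auto
          have "a*(1 - r t1)*\<eta> \<le> r t*(1 - r t)*(- G t)"
            by (rule prodmono) (use I[of t] I[of t1] t1 H[of t] rmono[of t1 t] Gt[of t] \<open>\<eta>>0\<close> tt \<open>a>0\<close> in auto)
          thus "a*(1 - r t1)*\<eta> \<le> - fr \<theta>1 \<theta>2 (x t) (y t) (r t)" unfolding frG' .
        qed (use I t1 in \<open>auto simp: less_imp_le\<close>)
      qed
      then obtain t0 where "t0 \<ge> t1" "r t0 < a" by auto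
      show "eventually (\<lambda>t. r t < a) at_top" unfolding eventually_at_top_linorder
      proof (intro exI[of _ t0] allI impI)
        fix t assume "t \<ge> t0"
        thus "r t < a" using rmono[of t0 t] \<open>t0 \<ge> t1\<close> \<open>r t0 < a\<close> by simp
      qed
    next
      fix a :: real assume "a < 0"
      show "eventually (\<lambda>t. a < r t) at_top" unfolding eventually_at_top_linorder
      proof (intro exI[of _ 0] allI impI)
        fix t :: real assume "t \<ge> 0" thus "a < r t" using I(5)[of t] \<open>a < 0\<close> by simp
      qed
    qed
  qed
  have c3: "\<exists>r_lim\<in>{0..1}. (r \<longlongrightarrow> r_lim) at_top" if "\<theta>1 = 1"
  proof -
    have "eventually (\<lambda>t. 1/2 < x t) at_top" by (rule order_tendstoD(1)[OF xlim]) simp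
    moreover have "eventually (\<lambda>t. y t < 1/2) at_top" by (rule order_tendstoD(2)[OF ylim]) simp
    ultimately have "eventually (\<lambda>t. 1/2 < x t \<and> y t < 1/2) at_top" by (rule eventually_conj)
    then obtain t1' where T1: "\<forall>t\<ge>t1'. 1/2 < x t \<and> y t < 1/2" by (auto simp: eventually_at_top_linorder)
    define t1 where "t1 = max 0 t1'"
    have t1: "t1 \<ge> 0" by (simp add: t1_def)
    have xy: "1/2 \<le> x t" "y t \<le> 1/2" if "t \<ge> t1" for t using T1 that by (auto simp: t1_def)
    define \<phi> where "\<phi> t = ln (r t) - ln (1 - r t)" for t
    have dphi: "(\<phi> has_real_derivative G t) (at t within {0..})" if "t \<ge> 0" for t
      unfolding \<phi>_def[abs_def] using dr[OF that] I[OF that]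
      by (auto intro!: derivative_eq_intros simp: frG field_simps)
    define U where "U t = \<phi> t + 8*(1+\<theta>2)*y t" for t
    define V where "V t = \<phi> t - 16*(1 - x t)" for t
    have dU: "(U has_real_derivative G t + 8*(1+\<theta>2)*fy (x t) (y t) (r t)) (at t within {0..})" if "t\<ge>0" for t
      unfolding U_def[abs_def] using dphi[OF that] dy[OF that] by (auto intro!: derivative_eq_intros)
    have dU': "((\<lambda>t. - U t) has_real_derivative - (G t + 8*(1+\<theta>2)*fy (x t) (y t) (r t))) (at t within {0..})" if "t\<ge>0" for t
      using dU[OF that] by (auto intro!: derivative_eq_intros)
    have dV: "(V has_real_derivative G t + 16*fx (x t) (y t) (r t)) (at t within {0..})" if "t \<ge> 0" for t
      unfolding V_def[abs_def] using dphi[OF that] dx[OF that] by (auto intro!: derivative_eq_intros)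
    have eG: "G t = (1+\<theta>2)*y t - 2*(1 - x t)" for t using \<open>\<theta>1 = 1\<close> by (simp add: G_def algebra_simps)
    have Ud: "U b \<le> U a" if "t1 \<le> a" "a \<le> b" for a b
    proof -
      have "- U a \<le> - U b"
      proof (rule mono_lemma[where g="\<lambda>t. - U t", OF dU' _ that(2)])
        show "0 \<le> a" using that t1 by simp
        fix t assume "a < t" "t < b"
        hence tt: "t \<ge> t1" "t \<ge> 0" using that t1 by auto
        have "8*fy (x t) (y t) (r t) \<le> - y t" using L9[of "x t" "y t" "r t"] xy[OF tt(1)] I[OF tt(2)] by simp
        hence "(1+\<theta>2)*(y t + 8*fy (x t) (y t) (r t)) \<le> 0" using th2 by (intro mult_nonneg_nonpos) auto
        moreover have "1 - x t \<ge> 0" using I[OF tt(2)] by simp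
        moreover have "G t + 8*(1+\<theta>2)*fy (x t) (y t) (r t) = (1+\<theta>2)*(y t + 8*fy (x t) (y t) (r t)) - 2*(1 - x t)"
          unfolding eG by (simp add: algebra_simps)
        ultimately show "0 \<le> - (G t + 8*(1+\<theta>2)*fy (x t) (y t) (r t))" by argo
      qed
      thus ?thesis by simp
    qed
    have Vi: "V a \<le> V b" if "t1 \<le> a" "a \<le> b" for a b
    proof (rule mono_lemma[OF dV _ that(2)])
      show "0 \<le> a" using that t1 by simp
      fix t assume "a < t" "t < b"
      hence tt: "t \<ge> t1" "t \<ge> 0" using that t1 by auto
      have "8*fx (x t) (y t) (r t) \<ge> 1 - x t" using L10[of "x t" "y t" "r t"] xy[OF tt(1)] I[OF tt(2)] by simp
      moreover have "(1+\<theta>2)*y t \<ge> 0" using th2 I[OF tt(2)] by simp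
      moreover have "G t + 16*fx (x t) (y t) (r t) = (1+\<theta>2)*y t + 2*(8*fx (x t) (y t) (r t) - (1 - x t))"
        unfolding eG by (simp add: algebra_simps)
      ultimately show "0 \<le> G t + 16*fx (x t) (y t) (r t)" by argo
    qed
    have VU: "V t \<le> U t1" if "t \<ge> t1" for t
    proof -
      have "8*(1+\<theta>2)*y t \<ge> 0" using th2 I[of t] that t1 by simp
      moreover have "1 - x t \<ge> 0" using I[of t] that t1 by simp
      ultimately have "V t \<le> U t" unfolding U_def V_def by argo
      also have "\<dots> \<le> U t1" using Ud[of t1 t] that by simp
      finally show ?thesis .
    qed
    define L where "L = (SUP t\<in>{t1..}. V t)"
    have bddV: "bdd_above (V ` {t1..})" by (rule bdd_aboveI2[where M="U t1"]) (use VU in auto)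
    have Vlim: "(V \<longlongrightarrow> L) at_top"
    proof (rule increasing_tendsto)
      show "eventually (\<lambda>t. V t \<le> L) at_top" unfolding eventually_at_top_linorder
      proof (intro exI[of _ t1] allI impI)
        fix t assume "t \<ge> t1"
        thus "V t \<le> L" unfolding L_def by (intro cSUP_upper bddV) simp
      qed
    next
      fix a assume "a < L"
      then obtain s where s: "s \<ge> t1" "a < V s" unfolding L_def using less_cSUP_iff[OF _ bddV] by auto
      show "eventually (\<lambda>t. a < V t) at_top" unfolding eventually_at_top_linorder
      proof (intro exI[of _ s] allI impI)
        fix t assume "t \<ge> s"
        thus "a < V t" using Vi[of s t] s by simp
      qed
    qed
    have "((\<lambda>t. V t + 16*(1 - x t)) \<longlongrightarrow> L + 16*(1 - 1)) at_top"
      by (intro tendsto_intros Vlim xlim)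
    moreover have "(\<lambda>t. V t + 16*(1 - x t)) = \<phi>" by (rule ext) (simp add: V_def)
    ultimately have philim: "(\<phi> \<longlongrightarrow> L) at_top" by simp
    have pos: "1 + exp L \<noteq> 0" by (metis add_pos_pos exp_gt_zero less_numeral_extra(1) less_irrefl)
    have lim2: "((\<lambda>t. exp (\<phi> t) / (1 + exp (\<phi> t))) \<longlongrightarrow> exp L / (1 + exp L)) at_top"
      by (intro tendsto_intros philim pos)
    have req: "exp (\<phi> t) / (1 + exp (\<phi> t)) = r t" if "t \<ge> 0" for t
    proof -
      have "exp (\<phi> t) = r t / (1 - r t)" using I[OF that] by (simp add: \<phi>_def exp_diff)
      hence e: "exp (\<phi> t) = r t * (1 + exp (\<phi> t))" using I[OF that] by (simp add: field_simps)
      have "0 < 1 + exp (\<phi> t)" by (simp add: add_pos_pos)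
      thus ?thesis using e by (simp add: divide_eq_eq)
    qed
    have ev: "eventually (\<lambda>t. exp (\<phi> t) / (1 + exp (\<phi> t)) = r t) at_top"
      unfolding eventually_at_top_linorder by (intro exI[of _ 0] allI impI req)
    have "(r \<longlongrightarrow> exp L / (1 + exp L)) at_top" by (rule tendsto_cong[OF ev, THEN iffD1, OF lim2])
    moreover have "exp L / (1 + exp L) \<in> {0..1}"
    proof -
      have a: "0 < exp L" "0 < 1 + exp L" by (simp_all add: add_pos_pos)
      hence "0 \<le> exp L / (1 + exp L)" by simp
      moreover have "exp L / (1 + exp L) \<le> 1" using a by (subst divide_le_eq_1) simp
      ultimately show ?thesis by simp
    qed
    ultimately show ?thesis by blast
  qed
  show ?thesis using xlim ylim c1 c2 c3 by blast
qed

end
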